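(* For every $a,\lambda>0$ and $c<1$, the function $$z\mapsto\frac{\Psi(a,c-2\lambda,z)\,\Psi(a+2\lambda,c,z)}{\left(\Psi(a+\lambda,c-\lambda,z)\right)^2}$$ is decreasing on $(0,\infty)$. In particular, for every $z>0$, $$1<\frac{\Psi(a,c-2\lambda,z)\,\Psi(a+2\lambda,c,z)}{\left(\Psi(a+\lambda,c-\lambda,z)\right)^2}<\frac{\Gamma(1-c)\,\Gamma(1-c+2\lambda)}{\Gamma(1-c+\lambda)^2}.$$
   Context: For $a>0$, real $c$ and $z>0$, $\Psi(a,c,z)=\frac{1}{\Gamma(a)}\int_0^\infty e^{-zt}t^{a-1}(1+t)^{c-a-1}\,dt$ is the confluent hypergeometric function of the second kind. *)

theory Defs
  imports "HOL-Analysis.Analysis"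
begin

text \<open>Confluent hypergeometric function of the second kind (Tricomi), via its
  integral representation, valid for a > 0, real c, z > 0:
  Psi(a,c,z) = 1/Gamma(a) * integral over (0,inf) of e^(-zt) t^(a-1) (1+t)^(c-a-1) dt.\<close>
definition Psi :: "real \<Rightarrow> real \<Rightarrow> real \<Rightarrow> real" where
  "Psi a c z = (1 / Gamma a) *
     (LBINT t:{0<..}. exp (- z * t) * t powr (a - 1) * (1 + t) powr (c - a - 1))"

end

theory Submission
  imports Defs
begin

definition M4 :: "(real \<Rightarrow> real \<Rightarrow> real \<Rightarrow> real \<Rightarrow> real) \<Rightarrow> bool" where
  "M4 T \<longleftrightarrow> (\<lambda>x. T (fst x) (fst (snd x)) (fst (snd (snd x))) (snd (snd (snd x)))) \<in> borel_measurable borel"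

definition M2 :: "(real \<Rightarrow> real \<Rightarrow> real) \<Rightarrow> bool" where
  "M2 f \<longleftrightarrow> (\<lambda>x. f (fst x) (snd x)) \<in> borel_measurable borel"

lemma meas4:
  assumes "M4 T" "f1 \<in> borel_measurable M" "f2 \<in> borel_measurable M" "f3 \<in> borel_measurable M" "f4 \<in> borel_measurable M"
  shows "(\<lambda>x. T (f1 x) (f2 x) (f3 x) (f4 x)) \<in> borel_measurable M"
proof -
  have "(\<lambda>x. (f1 x, f2 x, f3 x, f4 x)) \<in> M \<rightarrow>\<^sub>M borel"
    unfolding borel_prod[symmetric] using assms(2-5) by measurable
  from measurable_compose[OF this assms(1)[unfolded M4_def]] show ?thesis by simp
qed

lemma meas2:
  assumes "M2 f" "f1 \<in> borel_measurable M" "f2 \<in> borel_measurable M"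
  shows "(\<lambda>x. f (f1 x) (f2 x)) \<in> borel_measurable M"
proof -
  have "(\<lambda>x. (f1 x, f2 x)) \<in> M \<rightarrow>\<^sub>M borel"
    unfolding borel_prod[symmetric] using assms(2-3) by measurable
  from measurable_compose[OF this assms(1)[unfolded M2_def]] show ?thesis by simp
qed

lemma swap2:
  fixes h :: "real \<Rightarrow> real \<Rightarrow> ennreal"
  assumes "(\<lambda>x. h (fst x) (snd x)) \<in> borel_measurable (borel \<Otimes>\<^sub>M borel)"
  shows "(\<integral>\<^sup>+x. \<integral>\<^sup>+y. h x y \<partial>lborel \<partial>lborel) = (\<integral>\<^sup>+x. \<integral>\<^sup>+y. h y x \<partial>lborel \<partial>lborel)"
proof -
  have "(\<lambda>x. h (fst x) (snd x)) \<in> borel_measurable (lborel \<Otimes>\<^sub>M lborel)"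
    using assms by (subst measurable_cong_sets[OF sets_pair_measure_cong[OF sets_lborel sets_lborel] refl])
  then show ?thesis using lborel_pair.Fubini'[of h] by (simp add: case_prod_unfold)
qed

definition Tot :: "(real \<Rightarrow> real \<Rightarrow> real \<Rightarrow> real \<Rightarrow> real) \<Rightarrow> ennreal" where
  "Tot T = (\<integral>\<^sup>+r. \<integral>\<^sup>+r'. \<integral>\<^sup>+s. \<integral>\<^sup>+s'. ennreal (T s r s' r') \<partial>lborel \<partial>lborel \<partial>lborel \<partial>lborel)"

lemma Tot_add:
  assumes m1: "M4 T1" and m2: "M4 T2"
  assumes n1: "\<And>s r s' r'. T1 s r s' r' \<ge> 0" and n2: "\<And>s r s' r'. T2 s r s' r' \<ge> 0"
  shows "Tot (\<lambda>s r s' r'. T1 s r s' r' + T2 s r s' r') = Tot T1 + Tot T2"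
proof -
  note [measurable (raw)] = meas4[OF m1] meas4[OF m2]
  show ?thesis
    unfolding Tot_def
    apply (simp only: ennreal_plus[OF n1 n2])
    apply (subst nn_integral_add, measurable)+
    done
qed

lemma Tot_prod:
  assumes m1: "M2 f" and m2: "M2 g"
  assumes n1: "\<And>s r. f s r \<ge> 0" and n2: "\<And>s r. g s r \<ge> 0"
  shows "Tot (\<lambda>s r s' r'. f s r * g s' r') =
    (\<integral>\<^sup>+r. \<integral>\<^sup>+s. ennreal (f s r) \<partial>lborel \<partial>lborel) * (\<integral>\<^sup>+r. \<integral>\<^sup>+s. ennreal (g s r) \<partial>lborel \<partial>lborel)"
proof -
  note [measurable (raw)] = meas2[OF m1] meas2[OF m2]
  show ?thesis
    unfolding Tot_def
    by (simp add: ennreal_mult n1 n2 nn_integral_cmult nn_integral_multc)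
qed

lemma Tot_swapr:
  assumes m: "M4 T"
  shows "Tot (\<lambda>s r s' r'. T s r' s' r) = Tot T"
proof -
  note [measurable (raw)] = meas4[OF m]
  show ?thesis unfolding Tot_def
    by (rule swap2[symmetric]) measurable
qed

lemma Tot_swaps:
  assumes m: "M4 T"
  shows "Tot (\<lambda>s r s' r'. T s' r s r') = Tot T"
proof -
  note [measurable (raw)] = meas4[OF m]
  have "Tot (\<lambda>s r s' r'. T s' r s r') = Tot T"
    unfolding Tot_def
    apply (rule nn_integral_cong, rule nn_integral_cong)
    apply (rule swap2[symmetric])
    apply measurable
    done
  then show ?thesis .
qed

lemma M4_swapr: "M4 T \<Longrightarrow> M4 (\<lambda>s r s' r'. T s r' s' r)"
  unfolding M4_def[of "\<lambda>s r s' r'. T s r' s' r"]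
  by (rule meas4) (simp_all add: borel_prod[symmetric])
lemma M4_swaps: "M4 T \<Longrightarrow> M4 (\<lambda>s r s' r'. T s' r s r')"
  unfolding M4_def[of "\<lambda>s r s' r'. T s' r s r'"]
  by (rule meas4) (simp_all add: borel_prod[symmetric])

lemma pos1:
  fixes f :: "real \<Rightarrow> ennreal"
  assumes [measurable]: "f \<in> borel_measurable borel" and "a < b" and pos: "\<And>x. a < x \<Longrightarrow> x < b \<Longrightarrow> 0 < f x"
  shows "0 < (\<integral>\<^sup>+x. f x \<partial>lborel)"
proof (rule ccontr)
  assume "\<not> 0 < (\<integral>\<^sup>+x. f x \<partial>lborel)"
  then have "(\<integral>\<^sup>+x. f x \<partial>lborel) = 0" by (simp add: zero_less_iff_neq_zero)
  then have "AE x in lborel. f x = 0" by (simp add: nn_integral_0_iff_AE)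
  then have "emeasure lborel {x \<in> space lborel. \<not> f x = 0} = 0"
    by (subst (asm) AE_iff_measurable[OF _ refl]) auto
  moreover have "{a<..<b} \<subseteq> {x \<in> space lborel. \<not> f x = 0}" using pos by force
  then have "emeasure lborel {a<..<b} \<le> emeasure lborel {x \<in> space lborel. \<not> f x = 0}"
    by (intro emeasure_mono) auto
  ultimately show False using \<open>a < b\<close> by simp
qed

lemma Tot_less:
  assumes m1: "M4 T1" and m2: "M4 T2"
  assumes n1: "\<And>s r s' r'. T1 s r s' r' \<ge> 0"
  assumes le: "\<And>s r s' r'. T1 s r s' r' \<le> T2 s r s' r'"
  assumes lt: "\<And>s r s' r'. a1 < s \<Longrightarrow> s < b1 \<Longrightarrow> a2 < r \<Longrightarrow> r < b2 \<Longrightarrow> a3 < s' \<Longrightarrow> s' < b3 \<Longrightarrow> a4 < r' \<Longrightarrow> r' < b4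
     \<Longrightarrow> T1 s r s' r' < T2 s r s' r'"
  assumes ab: "a1 < b1" "a2 < b2" "a3 < b3" "a4 < b4"
  assumes fin: "Tot T1 \<noteq> \<infinity>"
  shows "Tot T1 < Tot T2"
proof -
  define D where "D = (\<lambda>s r s' r'. T2 s r s' r' - T1 s r s' r')"
  have mD: "M4 D" using m1 m2 unfolding M4_def D_def by measurable
  note [measurable (raw)] = meas4[OF mD]
  have nD: "\<And>s r s' r'. D s r s' r' \<ge> 0" using le by (simp add: D_def)
  have "Tot T2 = Tot (\<lambda>s r s' r'. T1 s r s' r' + D s r s' r')" by (simp add: D_def)
  also have "\<dots> = Tot T1 + Tot D" by (rule Tot_add[OF m1 mD n1 nD])
  finally have eq: "Tot T2 = Tot T1 + Tot D" .
  have "0 < Tot D" unfolding Tot_def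
    apply (rule pos1[OF _ ab(2)], measurable)
    apply (rule pos1[OF _ ab(4)], measurable)
    apply (rule pos1[OF _ ab(1)], measurable)
    apply (rule pos1[OF _ ab(3)], measurable)
    using lt by (simp add: D_def)
  then show ?thesis using fin unfolding eq
    by (metis add.right_neutral ennreal_add_left_cancel_less)
qed

lemma sym4:
  fixes f1 g1 f2 g2 :: "real \<Rightarrow> real \<Rightarrow> real"
  assumes m: "M2 f1" "M2 g1" "M2 f2" "M2 g2"
  assumes n: "\<And>s r. f1 s r \<ge> 0" "\<And>s r. g1 s r \<ge> 0" "\<And>s r. f2 s r \<ge> 0" "\<And>s r. g2 s r \<ge> 0"
  assumes le: "\<And>s r s' r'. f1 s r * g1 s' r' + f1 s' r' * g1 s r + f1 s r' * g1 s' r + f1 s' r * g1 s r'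
     \<le> f2 s r * g2 s' r' + f2 s' r' * g2 s r + f2 s r' * g2 s' r + f2 s' r * g2 s r'"
  assumes lt: "\<And>s r s' r'. xa < s \<Longrightarrow> s < xb \<Longrightarrow> ya < r \<Longrightarrow> r < yb \<Longrightarrow> ua < s' \<Longrightarrow> s' < ub \<Longrightarrow> va < r' \<Longrightarrow> r' < vb
     \<Longrightarrow> f1 s r * g1 s' r' + f1 s' r' * g1 s r + f1 s r' * g1 s' r + f1 s' r * g1 s r'
     < f2 s r * g2 s' r' + f2 s' r' * g2 s r + f2 s r' * g2 s' r + f2 s' r * g2 s r'"
  assumes ab: "xa < xb" "ya < yb" "ua < ub" "va < vb"
  assumes fin: "(\<integral>\<^sup>+r. \<integral>\<^sup>+s. ennreal (f1 s r) \<partial>lborel \<partial>lborel) * (\<integral>\<^sup>+r. \<integral>\<^sup>+s. ennreal (g1 s r) \<partial>lborel \<partial>lborel) \<noteq> \<infinity>"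
  shows "(\<integral>\<^sup>+r. \<integral>\<^sup>+s. ennreal (f1 s r) \<partial>lborel \<partial>lborel) * (\<integral>\<^sup>+r. \<integral>\<^sup>+s. ennreal (g1 s r) \<partial>lborel \<partial>lborel)
       < (\<integral>\<^sup>+r. \<integral>\<^sup>+s. ennreal (f2 s r) \<partial>lborel \<partial>lborel) * (\<integral>\<^sup>+r. \<integral>\<^sup>+s. ennreal (g2 s r) \<partial>lborel \<partial>lborel)"
proof -
  have four: "Tot (\<lambda>s r s' r'. f s r * g s' r' + f s' r' * g s r + f s r' * g s' r + f s' r * g s r')
     = 4 * ((\<integral>\<^sup>+r. \<integral>\<^sup>+s. ennreal (f s r) \<partial>lborel \<partial>lborel) * (\<integral>\<^sup>+r. \<integral>\<^sup>+s. ennreal (g s r) \<partial>lborel \<partial>lborel))"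
    if mf: "M2 f" and mg: "M2 g" and nf: "\<And>s r. f s r \<ge> 0" and ng: "\<And>s r. g s r \<ge> 0" for f g
  proof -
    note [measurable (raw)] = meas2[OF mf] meas2[OF mg]
    define T where "T = (\<lambda>s r s' r'. f s r * g s' r')"
    have mT: "M4 T" unfolding M4_def T_def borel_prod[symmetric] by measurable
    have nT: "\<And>s r s' r'. T s r s' r' \<ge> 0" unfolding T_def using nf ng by simp
    have e1: "Tot (\<lambda>s r s' r'. T s' r' s r) = Tot T"
    proof -
      have "Tot (\<lambda>s r s' r'. T s' r' s r) = Tot (\<lambda>s r s' r'. T s' r s r')"
        using Tot_swapr[OF M4_swaps[OF mT]] by simp
      also have "\<dots> = Tot T" by (rule Tot_swaps[OF mT])
      finally show ?thesis .
    qed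
    have e2: "Tot (\<lambda>s r s' r'. T s r' s' r) = Tot T" by (rule Tot_swapr[OF mT])
    have e3: "Tot (\<lambda>s r s' r'. T s' r s r') = Tot T" by (rule Tot_swaps[OF mT])
    have "Tot (\<lambda>s r s' r'. f s r * g s' r' + f s' r' * g s r + f s r' * g s' r + f s' r * g s r')
      = Tot (\<lambda>s r s' r'. T s r s' r' + T s' r' s r + T s r' s' r + T s' r s r')" by (simp add: T_def)
    also have "\<dots> = Tot T + Tot (\<lambda>s r s' r'. T s' r' s r) + Tot (\<lambda>s r s' r'. T s r' s' r) + Tot (\<lambda>s r s' r'. T s' r s r')"
      apply (subst Tot_add, unfold M4_def T_def borel_prod[symmetric], measurable, measurable,
             (intro add_nonneg_nonneg mult_nonneg_nonneg nf ng)+)+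
      apply (rule refl)
      done
    also have "\<dots> = 4 * Tot T" proof -
      have "(4::ennreal) = 1+1+1+1" by simp
      then show ?thesis by (simp only: e1 e2 e3 distrib_right mult_1)
    qed
    also have "Tot T = (\<integral>\<^sup>+r. \<integral>\<^sup>+s. ennreal (f s r) \<partial>lborel \<partial>lborel) * (\<integral>\<^sup>+r. \<integral>\<^sup>+s. ennreal (g s r) \<partial>lborel \<partial>lborel)"
      unfolding T_def by (rule Tot_prod[OF mf mg nf ng])
    finally show ?thesis .
  qed
  note [measurable (raw)] = meas2[OF m(1)] meas2[OF m(2)] meas2[OF m(3)] meas2[OF m(4)]
  have "Tot (\<lambda>s r s' r'. f1 s r * g1 s' r' + f1 s' r' * g1 s r + f1 s r' * g1 s' r + f1 s' r * g1 s r')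
     < Tot (\<lambda>s r s' r'. f2 s r * g2 s' r' + f2 s' r' * g2 s r + f2 s r' * g2 s' r + f2 s' r * g2 s r')"
    apply (rule Tot_less[OF _ _ _ le lt ab])
    apply (unfold M4_def borel_prod[symmetric]; measurable)
    apply (unfold M4_def borel_prod[symmetric]; measurable)
    using n apply (simp add: add_nonneg_nonneg)
    apply assumption+
    unfolding four[OF m(1,2) n(1,2)] using fin by (simp add: ennreal_mult_eq_top_iff)
  then show ?thesis unfolding four[OF m(1,2) n(1,2)] four[OF m(3,4) n(3,4)]
    by (meson linorder_not_le mult_left_mono zero_le leD)
qed

lemma gamma_scaled:
  fixes s y :: real
  assumes s: "s > 0" and y: "y > 0"
  shows "(\<integral>\<^sup>+x. ennreal (indicator {0<..} x * x powr (s - 1) * exp (- (y * x))) \<partial>lborel)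
         = ennreal (Gamma s * y powr (- s))"
proof -
  define I where "I = (\<integral>\<^sup>+x. ennreal (indicator {0<..} x * x powr (s - 1) * exp (- (y * x))) \<partial>lborel)"
  have "ennreal (Gamma s) = (\<integral>\<^sup>+t. ennreal (indicator {0..} t * t powr (s - 1) / exp t) \<partial>lborel)"
    using Gamma_conv_nn_integral_real[OF s] by simp
  also have "\<dots> = ennreal \<bar>y\<bar> * (\<integral>\<^sup>+x. ennreal (indicator {0..} (0 + y * x) * (0 + y * x) powr (s - 1) / exp (0 + y * x)) \<partial>lborel)"
    by (rule nn_integral_real_affine) (use y in auto)
  also have "(\<integral>\<^sup>+x. ennreal (indicator {0..} (0 + y * x) * (0 + y * x) powr (s - 1) / exp (0 + y * x)) \<partial>lborel)
      = (\<integral>\<^sup>+x. ennreal (y powr (s - 1)) * ennreal (indicator {0<..} x * x powr (s - 1) * exp (- (y * x))) \<partial>lborel)"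
  proof (rule nn_integral_cong)
    fix x :: real
    show "ennreal (indicator {0..} (0 + y * x) * (0 + y * x) powr (s - 1) / exp (0 + y * x)) =
         ennreal (y powr (s - 1)) * ennreal (indicator {0<..} x * x powr (s - 1) * exp (- (y * x)))"
    proof (cases "x > 0")
      case True
      then show ?thesis using y
        by (simp add: ennreal_mult[symmetric] powr_mult exp_minus field_simps indicator_def)
    next
      case False
      then have "y * x \<le> 0" using y by (simp add: mult_nonneg_nonpos)
      then show ?thesis using False y
        by (cases "x = 0") (auto simp: indicator_def)
    qed
  qed
  also have "\<dots> = ennreal (y powr (s - 1)) * I" unfolding I_def
    by (rule nn_integral_cmult) measurable
  finally have eq: "ennreal (Gamma s) = ennreal (y * y powr (s - 1)) * I"
    using y by (simp add: ennreal_mult mult.assoc)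
  have yy: "y * y powr (s - 1) = y powr s" using y by (simp add: powr_diff)
  have "ennreal (Gamma s * y powr (- s)) = ennreal (y powr (- s)) * ennreal (Gamma s)"
    using y Gamma_real_pos[OF s] by (simp add: ennreal_mult[symmetric] mult.commute)
  also have "\<dots> = ennreal (y powr (- s) * y powr s) * I" unfolding eq yy
    by (simp add: ennreal_mult mult.assoc)
  also have "y powr (- s) * y powr s = 1" using y by (simp add: powr_minus)
  finally show ?thesis by (simp add: I_def)
qed

definition Nint :: "real \<Rightarrow> real \<Rightarrow> real \<Rightarrow> ennreal" where
  "Nint p b z = (\<integral>\<^sup>+t. ennreal (indicator {0<..} t * (exp (- z * t) * t powr (p - 1) * (1 + t) powr b)) \<partial>lborel)"

definition Mint :: "real \<Rightarrow> real \<Rightarrow> real \<Rightarrow> ennreal" where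
  "Mint p g z = (\<integral>\<^sup>+x. ennreal (indicator {0<..} x * x powr (g - 1) * exp (- x) * (x + z) powr (- p)) \<partial>lborel)"

lemma xrep:
  assumes p: "p > 0" and g: "g > 0" and z: "z \<ge> 0"
  shows "ennreal (Gamma g) * Nint p (- g) z = ennreal (Gamma p) * Mint p g z"
proof -
  have "ennreal (Gamma g) * Nint p (- g) z =
    (\<integral>\<^sup>+t. ennreal (Gamma g) * ennreal (indicator {0<..} t * (exp (- z * t) * t powr (p - 1) * (1 + t) powr (- g))) \<partial>lborel)"
    unfolding Nint_def by (rule nn_integral_cmult[symmetric]) measurable
  also have "\<dots> = (\<integral>\<^sup>+t. \<integral>\<^sup>+x. ennreal (indicator {0<..} t * exp (- z * t) * t powr (p - 1)) *
        ennreal (indicator {0<..} x * x powr (g - 1) * exp (- ((1 + t) * x))) \<partial>lborel \<partial>lborel)"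
  proof (rule nn_integral_cong)
    fix t :: real
    show "ennreal (Gamma g) * ennreal (indicator {0<..} t * (exp (- z * t) * t powr (p - 1) * (1 + t) powr (- g))) =
      (\<integral>\<^sup>+x. ennreal (indicator {0<..} t * exp (- z * t) * t powr (p - 1)) *
        ennreal (indicator {0<..} x * x powr (g - 1) * exp (- ((1 + t) * x))) \<partial>lborel)"
    proof (cases "t > 0")
      case True
      have "(\<integral>\<^sup>+x. ennreal (indicator {0<..} t * exp (- z * t) * t powr (p - 1)) *
        ennreal (indicator {0<..} x * x powr (g - 1) * exp (- ((1 + t) * x))) \<partial>lborel)
        = ennreal (indicator {0<..} t * exp (- z * t) * t powr (p - 1)) * ennreal (Gamma g * (1 + t) powr (- g))"
        by (subst nn_integral_cmult) (use True g in \<open>simp_all add: gamma_scaled\<close>)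
      then show ?thesis using True g Gamma_real_pos[OF g]
        by (simp add: ennreal_mult[symmetric] mult_ac)
    qed simp
  qed
  also have "\<dots> = (\<integral>\<^sup>+x. \<integral>\<^sup>+t. ennreal (indicator {0<..} t * exp (- z * t) * t powr (p - 1)) *
        ennreal (indicator {0<..} x * x powr (g - 1) * exp (- ((1 + t) * x))) \<partial>lborel \<partial>lborel)"
    by (rule swap2) measurable
  also have "\<dots> = (\<integral>\<^sup>+x. ennreal (indicator {0<..} x * x powr (g - 1) * exp (- x)) *
        (\<integral>\<^sup>+t. ennreal (indicator {0<..} t * t powr (p - 1) * exp (- ((z + x) * t))) \<partial>lborel) \<partial>lborel)"
  proof (rule nn_integral_cong)
    fix x :: real
    have "(\<integral>\<^sup>+t. ennreal (indicator {0<..} t * exp (- z * t) * t powr (p - 1)) *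
        ennreal (indicator {0<..} x * x powr (g - 1) * exp (- ((1 + t) * x))) \<partial>lborel)
      = (\<integral>\<^sup>+t. ennreal (indicator {0<..} x * x powr (g - 1) * exp (- x)) *
        ennreal (indicator {0<..} t * t powr (p - 1) * exp (- ((z + x) * t))) \<partial>lborel)"
      by (rule nn_integral_cong) (simp add: ennreal_mult[symmetric] indicator_def exp_add[symmetric] algebra_simps)
    also have "\<dots> = ennreal (indicator {0<..} x * x powr (g - 1) * exp (- x)) *
        (\<integral>\<^sup>+t. ennreal (indicator {0<..} t * t powr (p - 1) * exp (- ((z + x) * t))) \<partial>lborel)"
      by (rule nn_integral_cmult) measurable
    finally show "(\<integral>\<^sup>+t. ennreal (indicator {0<..} t * exp (- z * t) * t powr (p - 1)) *
        ennreal (indicator {0<..} x * x powr (g - 1) * exp (- ((1 + t) * x))) \<partial>lborel) = 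
        ennreal (indicator {0<..} x * x powr (g - 1) * exp (- x)) *
        (\<integral>\<^sup>+t. ennreal (indicator {0<..} t * t powr (p - 1) * exp (- ((z + x) * t))) \<partial>lborel)" .
  qed
  also have "\<dots> = (\<integral>\<^sup>+x. ennreal (Gamma p) * ennreal (indicator {0<..} x * x powr (g - 1) * exp (- x) * (x + z) powr (- p)) \<partial>lborel)"
  proof (rule nn_integral_cong)
    fix x :: real
    show "ennreal (indicator {0<..} x * x powr (g - 1) * exp (- x)) *
        (\<integral>\<^sup>+t. ennreal (indicator {0<..} t * t powr (p - 1) * exp (- ((z + x) * t))) \<partial>lborel) =
        ennreal (Gamma p) * ennreal (indicator {0<..} x * x powr (g - 1) * exp (- x) * (x + z) powr (- p))"
    proof (cases "x > 0")
      case True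
      then have zx: "z + x > 0" using z by simp
      have "(\<integral>\<^sup>+t. ennreal (indicator {0<..} t * t powr (p - 1) * exp (- ((z + x) * t))) \<partial>lborel)
        = ennreal (Gamma p * (z + x) powr (- p))" by (rule gamma_scaled[OF p zx])
      then show ?thesis using True p Gamma_real_pos[OF p]
        by (simp add: ennreal_mult[symmetric] mult_ac add.commute)
    qed simp
  qed
  also have "\<dots> = ennreal (Gamma p) * Mint p g z" unfolding Mint_def
    by (rule nn_integral_cmult) measurable
  finally show ?thesis .
qed

definition qf :: "real \<Rightarrow> real" where "qf r = r / (1 + r)\<^sup>2"
definition Kf :: "real \<Rightarrow> real \<Rightarrow> real \<Rightarrow> real" where "Kf b \<sigma> q = (1 + \<sigma> + \<sigma>\<^sup>2 * q) powr b"
definition Cf :: "real \<Rightarrow> real \<Rightarrow> real" where "Cf l r = (r powr l + r powr (- l)) / 2"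

lemma lemK:
  assumes b: "b < 0" and s: "0 < \<sigma>'" "\<sigma>' < \<sigma>" and q: "0 < q" "q < q'"
  shows "Kf b \<sigma> q' * Kf b \<sigma>' q < Kf b \<sigma> q * Kf b \<sigma>' q'"
proof -
  have p: "0 < 1 + \<sigma> + \<sigma>\<^sup>2 * q" "0 < 1 + \<sigma>' + \<sigma>'\<^sup>2 * q'" "0 < 1 + \<sigma> + \<sigma>\<^sup>2 * q'" "0 < 1 + \<sigma>' + \<sigma>'\<^sup>2 * q"
    using s q by (auto intro!: add_pos_nonneg)
  have d: "\<sigma>\<^sup>2 * (1 + \<sigma>') - \<sigma>'\<^sup>2 * (1 + \<sigma>) = (\<sigma> - \<sigma>') * (\<sigma> + \<sigma>' + \<sigma> * \<sigma>')"
    by (simp add: power2_eq_square algebra_simps)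
  have "0 < \<sigma> * \<sigma>'" using s by simp
  then have "0 < \<sigma> + \<sigma>' + \<sigma> * \<sigma>'" using s by linarith
  then have "0 < (\<sigma> - \<sigma>') * (\<sigma> + \<sigma>' + \<sigma> * \<sigma>')" using s by (intro mult_pos_pos) auto
  then have "0 < (q' - q) * (\<sigma>\<^sup>2 * (1 + \<sigma>') - \<sigma>'\<^sup>2 * (1 + \<sigma>))" using q d by (intro mult_pos_pos) auto
  moreover have "(1 + \<sigma> + \<sigma>\<^sup>2 * q') * (1 + \<sigma>' + \<sigma>'\<^sup>2 * q) - (1 + \<sigma> + \<sigma>\<^sup>2 * q) * (1 + \<sigma>' + \<sigma>'\<^sup>2 * q')
     = (q' - q) * (\<sigma>\<^sup>2 * (1 + \<sigma>') - \<sigma>'\<^sup>2 * (1 + \<sigma>))"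
    by (simp add: algebra_simps)
  ultimately have lt: "(1 + \<sigma> + \<sigma>\<^sup>2 * q) * (1 + \<sigma>' + \<sigma>'\<^sup>2 * q') < (1 + \<sigma> + \<sigma>\<^sup>2 * q') * (1 + \<sigma>' + \<sigma>'\<^sup>2 * q)"
    by linarith
  have "((1 + \<sigma> + \<sigma>\<^sup>2 * q') * (1 + \<sigma>' + \<sigma>'\<^sup>2 * q)) powr b < ((1 + \<sigma> + \<sigma>\<^sup>2 * q) * (1 + \<sigma>' + \<sigma>'\<^sup>2 * q')) powr b"
    by (rule powr_less_mono2_neg[OF b _ lt]) (use p in simp)
  then show ?thesis unfolding Kf_def using p by (simp add: powr_mult)
qed

lemma Cf_cosh: "r > 0 \<Longrightarrow> Cf l r = cosh (l * ln r)"
  by (simp add: Cf_def cosh_def powr_def)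

lemma qf_cosh: assumes "r > 0" shows "qf r = 1 / (2 * cosh (ln r) + 2)"
proof -
  have "2 * cosh (ln r) + 2 = (1 + r)\<^sup>2 / r" using assms
    by (simp add: cosh_ln_real field_simps power2_eq_square)
  then show ?thesis by (simp add: qf_def)
qed

lemma lemC:
  assumes l: "l > 0" and r: "r > 0" "r' > 0" and q: "qf r < qf r'"
  shows "Cf l r' < Cf l r"
proof -
  have "cosh (ln r') < cosh (ln r)"
  proof -
    have p: "0 < 2 * cosh (ln r) + 2" "0 < 2 * cosh (ln r') + 2"
      using cosh_real_pos[of "ln r"] cosh_real_pos[of "ln r'"] by linarith+
    from q show ?thesis unfolding qf_cosh[OF r(1)] qf_cosh[OF r(2)] using p
      by (simp add: divide_simps)
  qed
  then have "\<bar>ln r'\<bar> < \<bar>ln r\<bar>"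
    by (metis abs_ge_zero cosh_real_abs cosh_real_nonneg_less_iff)
  then have "\<bar>l * ln r'\<bar> < \<bar>l * ln r\<bar>" using l by (simp add: abs_mult)
  then have "cosh (l * ln r') < cosh (l * ln r)"
    by (metis abs_ge_zero cosh_real_abs cosh_real_nonneg_less_iff)
  then show ?thesis using r by (simp add: Cf_cosh)
qed

lemma lemCeq:
  assumes r: "r > 0" "r' > 0" and q: "qf r = qf r'"
  shows "Cf l r' = Cf l r"
proof -
  have p: "0 < 2 * cosh (ln r) + 2" "0 < 2 * cosh (ln r') + 2"
    using cosh_real_pos[of "ln r"] cosh_real_pos[of "ln r'"] by linarith+
  from q have "cosh (ln r') = cosh (ln r)" unfolding qf_cosh[OF r(1)] qf_cosh[OF r(2)] using p
    by (simp add: divide_simps)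
  then have "\<bar>ln r'\<bar> = \<bar>ln r\<bar>" by simp
  then have "\<bar>l * ln r'\<bar> = \<bar>l * ln r\<bar>" by (simp add: abs_mult)
  then have "cosh (l * ln r') = cosh (l * ln r)" by simp
  then show ?thesis using r by (simp add: Cf_cosh)
qed

lemma lemE:
  assumes "z1 < z2" "\<sigma>' < (\<sigma>::real)"
  shows "exp (- z2 * \<sigma>) * exp (- z1 * \<sigma>') < exp (- z1 * \<sigma>) * exp (- z2 * \<sigma>')"
proof -
  have "0 < (z2 - z1) * (\<sigma> - \<sigma>')" using assms by simp
  then have "- z2 * \<sigma> + - z1 * \<sigma>' < - z1 * \<sigma> + - z2 * \<sigma>'" by (simp add: algebra_simps)
  then show ?thesis by (simp add: exp_add[symmetric])
qed

lemma sgn3: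
  fixes z1 z2 b l \<sigma> \<sigma>' r r' :: real
  assumes z: "z1 < z2" and b: "b < 0" and l: "l > 0" and pos: "\<sigma> > 0" "\<sigma>' > 0" "r > 0" "r' > 0"
  defines "E \<equiv> exp (- z2 * \<sigma>) * exp (- z1 * \<sigma>')" and "E' \<equiv> exp (- z1 * \<sigma>) * exp (- z2 * \<sigma>')"
  defines "h \<equiv> Kf b \<sigma> (qf r) * Kf b \<sigma>' (qf r')" and "h' \<equiv> Kf b \<sigma> (qf r') * Kf b \<sigma>' (qf r)"
  shows "0 \<le> (E' - E) * (h - h') * (Cf l r - Cf l r')"
    and "\<sigma> \<noteq> \<sigma>' \<Longrightarrow> qf r \<noteq> qf r' \<Longrightarrow> 0 < (E' - E) * (h - h') * (Cf l r - Cf l r')"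
proof -
  have qp: "qf r > 0" "qf r' > 0" using pos by (auto simp: qf_def)
  have strict: "0 < (E' - E) * (h - h') * (Cf l r - Cf l r')" if ne: "\<sigma> \<noteq> \<sigma>'" "qf r \<noteq> qf r'"
  proof (cases "\<sigma>' < \<sigma>")
    case True
    have E: "E < E'" unfolding E_def E'_def by (rule lemE[OF z True])
    show ?thesis
    proof (cases "qf r < qf r'")
      case True
      have "h' < h" unfolding h_def h'_def by (rule lemK[OF b pos(2) \<open>\<sigma>' < \<sigma>\<close> qp(1) True])
      moreover have "Cf l r' < Cf l r" by (rule lemC[OF l pos(3,4) True])
      ultimately show ?thesis using E by (intro mult_pos_pos) auto
    next
      case False
      then have q: "qf r' < qf r" using ne by auto
      have "h < h'" unfolding h_def h'_def using lemK[OF b pos(2) \<open>\<sigma>' < \<sigma>\<close> qp(2) q] by (simp add: mult_ac)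
      moreover have "Cf l r < Cf l r'" by (rule lemC[OF l pos(4,3) q])
      ultimately show ?thesis using E by (intro mult_neg_neg mult_pos_neg) auto
    qed
  next
    case False
    then have s: "\<sigma> < \<sigma>'" using ne by auto
    have E: "E' < E" unfolding E_def E'_def using lemE[OF z s] by (simp add: mult_ac)
    show ?thesis
    proof (cases "qf r < qf r'")
      case True
      have "h < h'" unfolding h_def h'_def using lemK[OF b pos(1) s qp(1) True] by (simp add: mult_ac)
      moreover have "Cf l r' < Cf l r" by (rule lemC[OF l pos(3,4) True])
      ultimately show ?thesis using E by (intro mult_pos_pos mult_neg_neg) auto
    next
      case False
      then have q: "qf r' < qf r" using ne by auto
      have "h' < h" unfolding h_def h'_def using lemK[OF b pos(1) s qp(2) q] by (simp add: mult_ac)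
      moreover have "Cf l r < Cf l r'" by (rule lemC[OF l pos(4,3) q])
      ultimately show ?thesis using E by (intro mult_neg_neg mult_neg_pos) auto
    qed
  qed
  then show "\<sigma> \<noteq> \<sigma>' \<Longrightarrow> qf r \<noteq> qf r' \<Longrightarrow> 0 < (E' - E) * (h - h') * (Cf l r - Cf l r')" by blast
  show "0 \<le> (E' - E) * (h - h') * (Cf l r - Cf l r')"
  proof (cases "\<sigma> = \<sigma>'")
    case True then show ?thesis by (simp add: E_def E'_def)
  next
    case False
    show ?thesis
    proof (cases "qf r = qf r'")
      case True then show ?thesis by (simp add: h_def h'_def)
    next
      case False
      with \<open>\<sigma> \<noteq> \<sigma>'\<close> strict show ?thesis by (simp add: less_imp_le)
    qed
  qed
qed

definition Wf :: "real \<Rightarrow> real \<Rightarrow> real \<Rightarrow> real" where "Wf a b t = t powr (a - 1) * (1 + t) powr b"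

lemma core_common:
  assumes s: "\<sigma> > 0" and r: "r > 0"
  shows "\<sigma> / (1 + r)\<^sup>2 * (Wf a b (\<sigma> * r / (1 + r)) * Wf a b (\<sigma> / (1 + r))) * (2 * \<sigma> powr (2 * l) * qf r powr l)
    = 2 * \<sigma> powr (2 * a - 1 + 2 * l) * (qf r powr (a - 1 + l) / (1 + r)\<^sup>2) * Kf b \<sigma> (qf r)"
proof -
  define d where "d = 1 + r"
  have d: "d > 0" using r by (simp add: d_def)
  define s' where "s' = \<sigma> * r / d"
  define t' where "t' = \<sigma> / d"
  have sp: "s' > 0" "t' > 0" using s r d by (simp_all add: s'_def t'_def)
  have st: "s' * t' = \<sigma>\<^sup>2 * qf r" by (simp add: s'_def t'_def qf_def d_def power2_eq_square)
  have st1: "(1 + s') * (1 + t') = 1 + \<sigma> + \<sigma>\<^sup>2 * qf r"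
  proof -
    have "\<sigma> * r / d + \<sigma> / d = \<sigma> * d / d" by (simp add: d_def add_divide_distrib[symmetric] distrib_left)
    then have "s' + t' = \<sigma>" using d by (simp add: s'_def t'_def)
    then show ?thesis using st by (simp add: algebra_simps)
  qed
  have "Wf a b s' * Wf a b t' = (s' * t') powr (a - 1) * ((1 + s') * (1 + t')) powr b"
    using sp by (simp add: Wf_def powr_mult)
  then have W: "Wf a b s' * Wf a b t' = (\<sigma>\<^sup>2 * qf r) powr (a - 1) * Kf b \<sigma> (qf r)"
    unfolding st st1 Kf_def .
  have q: "qf r > 0" using r by (simp add: qf_def)
  have sq: "(\<sigma>\<^sup>2 * qf r) powr (a - 1) = \<sigma> powr (2 * a - 2) * qf r powr (a - 1)"
  proof -
    have "(\<sigma>\<^sup>2) powr (a - 1) = \<sigma> powr (2 * a - 2)"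
      using s by (simp add: power2_eq_square powr_mult powr_add[symmetric] algebra_simps)
    then show ?thesis using s q by (simp add: powr_mult)
  qed
  have e1: "\<sigma> * \<sigma> powr (2 * a - 2) * \<sigma> powr (2 * l) = \<sigma> powr (2 * a - 1 + 2 * l)"
  proof -
    have "\<sigma> powr (1 + (2 * a - 2) + 2 * l) = \<sigma> powr 1 * \<sigma> powr (2 * a - 2) * \<sigma> powr (2 * l)"
      by (simp only: powr_add)
    moreover have "1 + (2 * a - 2) + 2 * l = 2 * a - 1 + 2 * l" by simp
    ultimately show ?thesis using s by simp
  qed
  have e2: "qf r powr (a - 1) * qf r powr l = qf r powr (a - 1 + l)" by (simp add: powr_add)
  have "\<sigma> / d\<^sup>2 * (Wf a b s' * Wf a b t') * (2 * \<sigma> powr (2 * l) * qf r powr l)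
     = 2 * (\<sigma> * \<sigma> powr (2 * a - 2) * \<sigma> powr (2 * l)) * ((qf r powr (a - 1) * qf r powr l) / d\<^sup>2) * Kf b \<sigma> (qf r)"
    unfolding W sq by (simp add: field_simps)
  also have "\<dots> = 2 * \<sigma> powr (2 * a - 1 + 2 * l) * (qf r powr (a - 1 + l) / d\<^sup>2) * Kf b \<sigma> (qf r)"
    unfolding e1 e2 ..
  finally show ?thesis by (simp add: s'_def t'_def d_def)
qed

lemma core_Q:
  assumes s: "\<sigma> > 0" and r: "r > 0"
  shows "2 * (\<sigma> * r / (1 + r)) powr l * (\<sigma> / (1 + r)) powr l = 2 * \<sigma> powr (2 * l) * qf r powr l"
proof -
  have q: "qf r > 0" using r by (simp add: qf_def)
  have "(\<sigma> * r / (1 + r)) * (\<sigma> / (1 + r)) = \<sigma> * \<sigma> * qf r" by (simp add: qf_def power2_eq_square)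
  then have "(\<sigma> * r / (1 + r)) powr l * (\<sigma> / (1 + r)) powr l = (\<sigma> * \<sigma> * qf r) powr l"
    using s r by (simp add: powr_mult[symmetric])
  also have "\<dots> = \<sigma> powr l * \<sigma> powr l * qf r powr l"
    using s q by (simp add: powr_mult)
  also have "\<dots> = \<sigma> powr (2 * l) * qf r powr l"
    by (simp add: powr_add[symmetric])
  finally show ?thesis by simp
qed

lemma core_P:
  assumes s: "\<sigma> > 0" and r: "r > 0"
  shows "(\<sigma> * r / (1 + r)) powr (2 * l) + (\<sigma> / (1 + r)) powr (2 * l) = 2 * \<sigma> powr (2 * l) * qf r powr l * Cf l r"
proof -
  define d where "d = 1 + r"
  have d: "d > 0" using r by (simp add: d_def)
  have a1: "(\<sigma> * r / d) powr (2 * l) = \<sigma> powr (2 * l) * r powr (2 * l) / d powr (2 * l)"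
    using s r d by (simp add: powr_mult powr_divide)
  have a2: "(\<sigma> / d) powr (2 * l) = \<sigma> powr (2 * l) / d powr (2 * l)"
    using s r d by (simp add: powr_divide)
  have a3: "qf r powr l = r powr l / d powr (2 * l)"
  proof -
    have "(d\<^sup>2) powr l = d powr (2 * l)" using d by (simp add: power2_eq_square powr_mult powr_add[symmetric])
    then show ?thesis using r d by (simp add: qf_def d_def powr_divide)
  qed
  have a4: "r powr l * r powr l = r powr (2 * l)" by (simp add: powr_add[symmetric])
  have a5: "r powr l * r powr (- l) = 1" using r by (simp add: powr_add[symmetric])
  have "2 * \<sigma> powr (2 * l) * qf r powr l * Cf l r = \<sigma> powr (2 * l) / d powr (2 * l) * (r powr l * r powr l + r powr l * r powr (- l))"
    unfolding a3 Cf_def using d by (simp add: field_simps)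
  also have "\<dots> = (\<sigma> * r / d) powr (2 * l) + (\<sigma> / d) powr (2 * l)"
    unfolding a4 a5 a1 a2 by (simp add: add_divide_distrib algebra_simps)
  finally show ?thesis by (simp add: d_def)
qed

definition Uf :: "real \<Rightarrow> real \<Rightarrow> real \<Rightarrow> real" where
  "Uf a l \<sigma> = indicator {0<..} \<sigma> * (2 * \<sigma> powr (2 * a - 1 + 2 * l))"
definition Vf :: "real \<Rightarrow> real \<Rightarrow> real \<Rightarrow> real" where
  "Vf a l r = indicator {0<..} r * (qf r powr (a - 1 + l) / (1 + r)\<^sup>2)"
definition Om :: "real \<Rightarrow> real \<Rightarrow> real \<Rightarrow> real \<Rightarrow> real \<Rightarrow> real \<Rightarrow> real" where
  "Om a l b z \<sigma> r = Uf a l \<sigma> * Vf a l r * exp (- z * \<sigma>) * Kf b \<sigma> (qf r)"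

lemma alg4:
  fixes U V Ea Eb C :: "real \<Rightarrow> real" and K :: "real \<Rightarrow> real \<Rightarrow> real"
  shows "(U s * V r * Eb s * K s r) * C r * (U s' * V r' * Ea s' * K s' r') + (U s' * V r' * Eb s' * K s' r') * C r' * (U s * V r * Ea s * K s r) +
        (U s * V r' * Eb s * K s r') * C r' * (U s' * V r * Ea s' * K s' r) + (U s' * V r * Eb s' * K s' r) * C r * (U s * V r' * Ea s * K s r')
     + (U s * U s' * V r * V r') * ((Ea s * Eb s' - Eb s * Ea s') * (K s r * K s' r' - K s r' * K s' r) * (C r - C r'))
     = (U s * V r * Ea s * K s r) * C r * (U s' * V r' * Eb s' * K s' r') + (U s' * V r' * Ea s' * K s' r') * C r' * (U s * V r * Eb s * K s r) +
        (U s * V r' * Ea s * K s r') * C r' * (U s' * V r * Eb s' * K s' r) + (U s' * V r * Ea s' * K s' r) * C r * (U s * V r' * Eb s * K s r')"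
  by (simp add: algebra_simps)

lemma Om_nonneg: "Om a l b z \<sigma> r \<ge> 0"
  by (auto simp: Om_def Uf_def Vf_def indicator_def qf_def Kf_def intro!: mult_nonneg_nonneg divide_nonneg_nonneg)

lemma Cf_nonneg: "Cf l r \<ge> 0"
  by (simp add: Cf_def)

lemma M2_Om: "M2 (Om a l b z)"
  unfolding M2_def Om_def Uf_def Vf_def qf_def Kf_def borel_prod[symmetric] by measurable

lemma Cf_meas[measurable]: "Cf l \<in> borel_measurable borel"
  unfolding Cf_def by measurable
lemma Om_meas[measurable]: "(\<lambda>x. Om a l b z (fst x) (snd x)) \<in> borel_measurable (borel \<Otimes>\<^sub>M borel)"
  unfolding Om_def Uf_def Vf_def qf_def Kf_def by measurable
lemma M2_OmC: "M2 (\<lambda>\<sigma> r. Om a l b z \<sigma> r * Cf l r)"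
  unfolding M2_def borel_prod[symmetric] by measurable

lemma qf_box: assumes "1 < r" "r < r'" shows "qf r' < qf r"
proof -
  have p: "(1 + r)\<^sup>2 > 0" "(1 + r')\<^sup>2 > 0" using assms by auto
  have "r' * (1 + r)\<^sup>2 - r * (1 + r')\<^sup>2 = (r' - r) * (1 - r * r')"
    by (simp add: power2_eq_square algebra_simps)
  moreover have "r * r' > 1" using assms by (smt (verit) mult_less_cancel_left1)
  then have "(r' - r) * (1 - r * r') < 0" using assms by (intro mult_pos_neg) auto
  ultimately have "r' * (1 + r)\<^sup>2 < r * (1 + r')\<^sup>2" by linarith
  then show ?thesis using p by (simp add: qf_def divide_simps)
qed

lemma mono_core:
  fixes a l b z1 z2 :: real
  assumes z: "z1 < z2" and b: "b < 0" and l: "l > 0"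
  defines "P \<equiv> \<lambda>z. (\<integral>\<^sup>+r. \<integral>\<^sup>+\<sigma>. ennreal (Om a l b z \<sigma> r * Cf l r) \<partial>lborel \<partial>lborel)"
  defines "Q \<equiv> \<lambda>z. (\<integral>\<^sup>+r. \<integral>\<^sup>+\<sigma>. ennreal (Om a l b z \<sigma> r) \<partial>lborel \<partial>lborel)"
  assumes fin: "P z2 * Q z1 \<noteq> \<infinity>"
  shows "P z2 * Q z1 < P z1 * Q z2"
  unfolding P_def Q_def
proof (rule sym4[where xa=1 and xb=2 and ya=1 and yb=2 and ua=3 and ub=4 and va=3 and vb=4])
  show "M2 (\<lambda>\<sigma> r. Om a l b z2 \<sigma> r * Cf l r)" "M2 (Om a l b z1)" "M2 (\<lambda>\<sigma> r. Om a l b z1 \<sigma> r * Cf l r)" "M2 (Om a l b z2)"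
    by (rule M2_Om M2_OmC)+
  show "\<And>s r. 0 \<le> Om a l b z2 s r * Cf l r" "\<And>s r. 0 \<le> Om a l b z1 s r"
       "\<And>s r. 0 \<le> Om a l b z1 s r * Cf l r" "\<And>s r. 0 \<le> Om a l b z2 s r"
    by (simp_all add: Om_nonneg Cf_nonneg)
  show "(1::real) < 2" "(1::real) < 2" "(3::real) < 4" "(3::real) < 4" by simp_all
  show "(\<integral>\<^sup>+r. \<integral>\<^sup>+s. ennreal (Om a l b z2 s r * Cf l r) \<partial>lborel \<partial>lborel) *
        (\<integral>\<^sup>+r. \<integral>\<^sup>+s. ennreal (Om a l b z1 s r) \<partial>lborel \<partial>lborel) \<noteq> \<infinity>"
    using fin by (simp add: P_def Q_def)
  define X where "X = (\<lambda>s r s' r'. Uf a l s * Uf a l s' * Vf a l r * Vf a l r')"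
  have key: "Om a l b z2 s r * Cf l r * Om a l b z1 s' r' + Om a l b z2 s' r' * Cf l r' * Om a l b z1 s r +
        Om a l b z2 s r' * Cf l r' * Om a l b z1 s' r + Om a l b z2 s' r * Cf l r * Om a l b z1 s r'
     + X s r s' r' * ((exp (- z1 * s) * exp (- z2 * s') - exp (- z2 * s) * exp (- z1 * s')) *
          (Kf b s (qf r) * Kf b s' (qf r') - Kf b s (qf r') * Kf b s' (qf r)) * (Cf l r - Cf l r'))
     = Om a l b z1 s r * Cf l r * Om a l b z2 s' r' + Om a l b z1 s' r' * Cf l r' * Om a l b z2 s r +
        Om a l b z1 s r' * Cf l r' * Om a l b z2 s' r + Om a l b z1 s' r * Cf l r * Om a l b z2 s r'" for s r s' r'
    unfolding Om_def X_def
    by (rule alg4[where U="Uf a l" and V="Vf a l" and Eb="\<lambda>s. exp (- z2 * s)" and K="\<lambda>s r. Kf b s (qf r)" and C="Cf l" and Ea="\<lambda>s. exp (- z1 * s)"])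
  have Xn: "X s r s' r' \<ge> 0" for s r s' r'
    unfolding X_def Uf_def Vf_def by (auto simp: indicator_def qf_def intro!: mult_nonneg_nonneg divide_nonneg_nonneg)
  show "Om a l b z2 s r * Cf l r * Om a l b z1 s' r' + Om a l b z2 s' r' * Cf l r' * Om a l b z1 s r +
        Om a l b z2 s r' * Cf l r' * Om a l b z1 s' r + Om a l b z2 s' r * Cf l r * Om a l b z1 s r'
     \<le> Om a l b z1 s r * Cf l r * Om a l b z2 s' r' + Om a l b z1 s' r' * Cf l r' * Om a l b z2 s r +
        Om a l b z1 s r' * Cf l r' * Om a l b z2 s' r + Om a l b z1 s' r * Cf l r * Om a l b z2 s r'" for s r s' r'
  proof (cases "s > 0 \<and> r > 0 \<and> s' > 0 \<and> r' > 0")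
    case True
    then have "0 \<le> X s r s' r' * ((exp (- z1 * s) * exp (- z2 * s') - exp (- z2 * s) * exp (- z1 * s')) *
          (Kf b s (qf r) * Kf b s' (qf r') - Kf b s (qf r') * Kf b s' (qf r)) * (Cf l r - Cf l r'))"
      using mult_nonneg_nonneg[OF Xn sgn3(1)[OF z b l, of s s' r r']] by auto
    then show ?thesis using key[of s r s' r'] by linarith
  next
    case False
    then have "X s r s' r' = 0" by (auto simp: X_def Uf_def Vf_def)
    then show ?thesis using key[of s r s' r'] by simp
  qed
  show "Om a l b z2 s r * Cf l r * Om a l b z1 s' r' + Om a l b z2 s' r' * Cf l r' * Om a l b z1 s r +
        Om a l b z2 s r' * Cf l r' * Om a l b z1 s' r + Om a l b z2 s' r * Cf l r * Om a l b z1 s r'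
     < Om a l b z1 s r * Cf l r * Om a l b z2 s' r' + Om a l b z1 s' r' * Cf l r' * Om a l b z2 s r +
        Om a l b z1 s r' * Cf l r' * Om a l b z2 s' r + Om a l b z1 s' r * Cf l r * Om a l b z2 s r'"
    if "1 < s" "s < 2" "1 < r" "r < 2" "3 < s'" "s' < 4" "3 < r'" "r' < 4" for s r s' r'
  proof -
    have pos: "s > 0" "r > 0" "s' > 0" "r' > 0" using that by auto
    have "X s r s' r' > 0" unfolding X_def Uf_def Vf_def using pos by (auto simp: qf_def intro!: mult_pos_pos divide_pos_pos)
    moreover have "qf r' < qf r" by (rule qf_box) (use that in auto)
    then have "0 < (exp (- z1 * s) * exp (- z2 * s') - exp (- z2 * s) * exp (- z1 * s')) *
          (Kf b s (qf r) * Kf b s' (qf r') - Kf b s (qf r') * Kf b s' (qf r)) * (Cf l r - Cf l r')"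
      using sgn3(2)[OF z b l pos(1,3,2,4)] that by auto
    ultimately have "0 < X s r s' r' * ((exp (- z1 * s) * exp (- z2 * s') - exp (- z2 * s) * exp (- z1 * s')) *
          (Kf b s (qf r) * Kf b s' (qf r') - Kf b s (qf r') * Kf b s' (qf r)) * (Cf l r - Cf l r'))"
      by (rule mult_pos_pos)
    then show ?thesis using key[of s r s' r'] by linarith
  qed
qed

lemma cov:
  fixes F :: "real \<Rightarrow> real \<Rightarrow> real"
  assumes m: "M2 F" and n: "\<And>s t. F s t \<ge> 0" and z: "\<And>s t. \<not> (s > 0 \<and> t > 0) \<Longrightarrow> F s t = 0"
  shows "(\<integral>\<^sup>+t. \<integral>\<^sup>+s. ennreal (F s t) \<partial>lborel \<partial>lborel) =
         (\<integral>\<^sup>+r. \<integral>\<^sup>+\<sigma>. ennreal (\<sigma> / (1 + r)\<^sup>2 * F (\<sigma> * r / (1 + r)) (\<sigma> / (1 + r))) \<partial>lborel \<partial>lborel)"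
proof -
  note [measurable (raw)] = meas2[OF m]
  have "(\<integral>\<^sup>+t. \<integral>\<^sup>+s. ennreal (F s t) \<partial>lborel \<partial>lborel) = (\<integral>\<^sup>+t. \<integral>\<^sup>+r. ennreal (t * F (t * r) t) \<partial>lborel \<partial>lborel)"
  proof (rule nn_integral_cong)
    fix t :: real
    show "(\<integral>\<^sup>+s. ennreal (F s t) \<partial>lborel) = (\<integral>\<^sup>+r. ennreal (t * F (t * r) t) \<partial>lborel)"
    proof (cases "t > 0")
      case True
      have "(\<integral>\<^sup>+s. ennreal (F s t) \<partial>lborel) = ennreal \<bar>t\<bar> * (\<integral>\<^sup>+r. ennreal (F (0 + t * r) t) \<partial>lborel)"
        by (rule nn_integral_real_affine) (use True in auto)
      also have "\<dots> = (\<integral>\<^sup>+r. ennreal (t * F (t * r) t) \<partial>lborel)"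
        using True by (subst nn_integral_cmult[symmetric]) (auto simp: ennreal_mult[symmetric] n)
      finally show ?thesis .
    next
      case False
      then show ?thesis using z by simp
    qed
  qed
  also have "\<dots> = (\<integral>\<^sup>+r. \<integral>\<^sup>+t. ennreal (t * F (t * r) t) \<partial>lborel \<partial>lborel)"
    by (rule swap2[symmetric]) measurable
  also have "\<dots> = (\<integral>\<^sup>+r. \<integral>\<^sup>+\<sigma>. ennreal (\<sigma> / (1 + r)\<^sup>2 * F (\<sigma> * r / (1 + r)) (\<sigma> / (1 + r))) \<partial>lborel \<partial>lborel)"
  proof (rule nn_integral_cong)
    fix r :: real
    show "(\<integral>\<^sup>+t. ennreal (t * F (t * r) t) \<partial>lborel) =
      (\<integral>\<^sup>+\<sigma>. ennreal (\<sigma> / (1 + r)\<^sup>2 * F (\<sigma> * r / (1 + r)) (\<sigma> / (1 + r))) \<partial>lborel)"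
    proof (cases "r > 0")
      case True
      have c: "1 / (1 + r) \<noteq> 0" using True by simp
      have "(\<integral>\<^sup>+t. ennreal (t * F (t * r) t) \<partial>lborel) =
        ennreal \<bar>1 / (1 + r)\<bar> * (\<integral>\<^sup>+\<sigma>. ennreal ((0 + 1 / (1 + r) * \<sigma>) * F ((0 + 1 / (1 + r) * \<sigma>) * r) (0 + 1 / (1 + r) * \<sigma>)) \<partial>lborel)"
        by (rule nn_integral_real_affine[OF _ c]) measurable
      also have "\<dots> = (\<integral>\<^sup>+\<sigma>. ennreal (\<sigma> / (1 + r)\<^sup>2 * F (\<sigma> * r / (1 + r)) (\<sigma> / (1 + r))) \<partial>lborel)"
      proof (subst nn_integral_cmult[symmetric], measurable, rule nn_integral_cong)
        fix \<sigma> :: real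
        show "ennreal \<bar>1 / (1 + r)\<bar> * ennreal ((0 + 1 / (1 + r) * \<sigma>) * F ((0 + 1 / (1 + r) * \<sigma>) * r) (0 + 1 / (1 + r) * \<sigma>)) =
          ennreal (\<sigma> / (1 + r)\<^sup>2 * F (\<sigma> * r / (1 + r)) (\<sigma> / (1 + r)))"
        proof (cases "\<sigma> > 0")
          case True
          with \<open>r > 0\<close> show ?thesis
            by (simp add: ennreal_mult[symmetric] n power2_eq_square field_simps)
        next
          case False
          then have "\<not> (\<sigma> / (1 + r) > 0)" using \<open>r > 0\<close> by (simp add: zero_less_divide_iff)
          then show ?thesis using z[of _ "\<sigma> / (1 + r)"] \<open>r > 0\<close> by (simp add: field_simps)
        qed
      qed
      finally show ?thesis .
    next
      case False
      have a: "F (t * r) t = 0" for t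
        using False z[of "t * r" t] by (cases "t > 0") (auto simp: zero_less_mult_iff)
      have b: "F (\<sigma> * r / (1 + r)) (\<sigma> / (1 + r)) = 0" for \<sigma>
      proof (rule z, rule notI)
        assume h: "0 < \<sigma> * r / (1 + r) \<and> 0 < \<sigma> / (1 + r)"
        then have "0 < (\<sigma> * r / (1 + r)) / (\<sigma> / (1 + r))" using h divide_pos_pos by blast
        moreover have "\<sigma> \<noteq> 0" "1 + r \<noteq> 0" using h by auto
        then have "(\<sigma> * r / (1 + r)) / (\<sigma> / (1 + r)) = r" by simp
        ultimately show False using False by simp
      qed
      show ?thesis by (simp add: a b)
    qed
  qed
  finally show ?thesis .
qed

lemma prod2:
  fixes f g :: "real \<Rightarrow> real"
  assumes [measurable]: "f \<in> borel_measurable borel" "g \<in> borel_measurable borel"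
  assumes "\<And>x. f x \<ge> 0" "\<And>x. g x \<ge> 0"
  shows "(\<integral>\<^sup>+t. \<integral>\<^sup>+s. ennreal (f s * g t) \<partial>lborel \<partial>lborel) = (\<integral>\<^sup>+s. ennreal (f s) \<partial>lborel) * (\<integral>\<^sup>+t. ennreal (g t) \<partial>lborel)"
  using assms(3,4) by (simp add: ennreal_mult nn_integral_cmult nn_integral_multc mult.commute)

definition FPf :: "real \<Rightarrow> real \<Rightarrow> real \<Rightarrow> real \<Rightarrow> real \<Rightarrow> real \<Rightarrow> real" where
  "FPf a l b z s t = indicator {0<..} s * indicator {0<..} t * exp (- z * (s + t)) * (Wf a b s * Wf a b t) * (s powr (2 * l) + t powr (2 * l))"
definition FQf :: "real \<Rightarrow> real \<Rightarrow> real \<Rightarrow> real \<Rightarrow> real \<Rightarrow> real \<Rightarrow> real" where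
  "FQf a l b z s t = indicator {0<..} s * indicator {0<..} t * exp (- z * (s + t)) * (Wf a b s * Wf a b t) * (2 * s powr l * t powr l)"

lemma sum_prod2:
  fixes f g :: "real \<Rightarrow> real"
  assumes [measurable]: "f \<in> borel_measurable borel" "g \<in> borel_measurable borel"
  assumes nf: "\<And>x. f x \<ge> 0" and ng: "\<And>x. g x \<ge> 0"
  shows "(\<integral>\<^sup>+t. \<integral>\<^sup>+s. ennreal (f s * g t + g s * f t) \<partial>lborel \<partial>lborel) =
    (\<integral>\<^sup>+s. ennreal (f s) \<partial>lborel) * (\<integral>\<^sup>+t. ennreal (g t) \<partial>lborel) + (\<integral>\<^sup>+s. ennreal (g s) \<partial>lborel) * (\<integral>\<^sup>+t. ennreal (f t) \<partial>lborel)"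
proof -
  have "(\<integral>\<^sup>+t. \<integral>\<^sup>+s. ennreal (f s * g t + g s * f t) \<partial>lborel \<partial>lborel) =
    (\<integral>\<^sup>+t. (\<integral>\<^sup>+s. ennreal (f s * g t) \<partial>lborel) + (\<integral>\<^sup>+s. ennreal (g s * f t) \<partial>lborel) \<partial>lborel)"
    by (rule nn_integral_cong, subst ennreal_plus, simp_all add: nf ng, rule nn_integral_add) auto
  also have "\<dots> = (\<integral>\<^sup>+t. \<integral>\<^sup>+s. ennreal (f s * g t) \<partial>lborel \<partial>lborel) + (\<integral>\<^sup>+t. \<integral>\<^sup>+s. ennreal (g s * f t) \<partial>lborel \<partial>lborel)"
    by (rule nn_integral_add) auto
  also have "\<dots> = (\<integral>\<^sup>+s. ennreal (f s) \<partial>lborel) * (\<integral>\<^sup>+t. ennreal (g t) \<partial>lborel) + (\<integral>\<^sup>+s. ennreal (g s) \<partial>lborel) * (\<integral>\<^sup>+t. ennreal (f t) \<partial>lborel)"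
    by (simp add: prod2 nf ng)
  finally show ?thesis .
qed

lemma P_N:
  "(\<integral>\<^sup>+t. \<integral>\<^sup>+s. ennreal (FPf a l b z s t) \<partial>lborel \<partial>lborel) = Nint a b z * Nint (a + 2 * l) b z + Nint (a + 2 * l) b z * Nint a b z"
proof -
  define n0 where "n0 = (\<lambda>t::real. indicator {0<..} t * (exp (- z * t) * t powr (a - 1) * (1 + t) powr b))"
  define n2 where "n2 = (\<lambda>t::real. indicator {0<..} t * (exp (- z * t) * t powr (a + 2 * l - 1) * (1 + t) powr b))"
  have eq: "FPf a l b z s t = n0 s * n2 t + n2 s * n0 t" for s t
  proof (cases "s > 0 \<and> t > 0")
    case True
    have "t powr (a + 2 * l - 1) = t powr (a - 1) * t powr (2 * l)" "s powr (a + 2 * l - 1) = s powr (a - 1) * s powr (2 * l)"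
      by (simp_all add: powr_add[symmetric] algebra_simps)
    moreover have "exp (- z * (s + t)) = exp (- z * s) * exp (- z * t)" by (simp add: exp_add[symmetric] algebra_simps)
    ultimately show ?thesis using True
      by (simp add: FPf_def n0_def n2_def Wf_def algebra_simps)
  qed (auto simp: FPf_def n0_def n2_def)
  have [measurable]: "n0 \<in> borel_measurable borel" "n2 \<in> borel_measurable borel" unfolding n0_def n2_def by measurable
  have nn: "n0 x \<ge> 0" "n2 x \<ge> 0" for x by (simp_all add: n0_def n2_def)
  show ?thesis unfolding eq
    by (subst sum_prod2) (auto simp: nn Nint_def n0_def n2_def)
qed

lemma Q_N:
  "(\<integral>\<^sup>+t. \<integral>\<^sup>+s. ennreal (FQf a l b z s t) \<partial>lborel \<partial>lborel) = Nint (a + l) b z * Nint (a + l) b z + Nint (a + l) b z * Nint (a + l) b z"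
proof -
  define n1 where "n1 = (\<lambda>t::real. indicator {0<..} t * (exp (- z * t) * t powr (a + l - 1) * (1 + t) powr b))"
  have eq: "FQf a l b z s t = n1 s * n1 t + n1 s * n1 t" for s t
  proof (cases "s > 0 \<and> t > 0")
    case True
    have "t powr (a + l - 1) = t powr (a - 1) * t powr l" "s powr (a + l - 1) = s powr (a - 1) * s powr l"
      by (simp_all add: powr_add[symmetric] algebra_simps)
    moreover have "exp (- z * (s + t)) = exp (- z * s) * exp (- z * t)" by (simp add: exp_add[symmetric] algebra_simps)
    ultimately show ?thesis using True
      by (simp add: FQf_def n1_def Wf_def algebra_simps)
  qed (auto simp: FQf_def n1_def)
  have [measurable]: "n1 \<in> borel_measurable borel" unfolding n1_def by measurable
  have nn: "n1 x \<ge> 0" for x by (simp_all add: n1_def)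
  show ?thesis unfolding eq
    by (subst sum_prod2) (auto simp: nn Nint_def n1_def)
qed

lemma not_both_pos:
  assumes "\<not> (\<sigma> > 0 \<and> r > (0::real))"
  shows "\<not> (\<sigma> * r / (1 + r) > 0 \<and> \<sigma> / (1 + r) > 0)"
proof
  assume h: "0 < \<sigma> * r / (1 + r) \<and> 0 < \<sigma> / (1 + r)"
  then have "0 < (\<sigma> * r / (1 + r)) / (\<sigma> / (1 + r))" using divide_pos_pos by blast
  moreover have "\<sigma> \<noteq> 0" "1 + r \<noteq> 0" using h by auto
  then have "(\<sigma> * r / (1 + r)) / (\<sigma> / (1 + r)) = r" by simp
  ultimately have "r > 0" by simp
  then have "1 + r > 0" by simp
  then have "\<sigma> > 0" using h by (simp add: zero_less_divide_iff)
  with \<open>r > 0\<close> assms show False by simp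
qed

lemma sum_st: assumes "r > 0" shows "\<sigma> * r / (1 + r) + \<sigma> / (1 + r) = (\<sigma>::real)"
proof -
  have "\<sigma> * r / (1 + r) + \<sigma> / (1 + r) = \<sigma> * (1 + r) / (1 + r)" by (simp add: add_divide_distrib[symmetric] distrib_left)
  then show ?thesis using assms by simp
qed

lemma P_Om:
  "(\<integral>\<^sup>+t. \<integral>\<^sup>+s. ennreal (FPf a l b z s t) \<partial>lborel \<partial>lborel) = (\<integral>\<^sup>+r. \<integral>\<^sup>+\<sigma>. ennreal (Om a l b z \<sigma> r * Cf l r) \<partial>lborel \<partial>lborel)"
proof -
  have "(\<integral>\<^sup>+t. \<integral>\<^sup>+s. ennreal (FPf a l b z s t) \<partial>lborel \<partial>lborel) =
    (\<integral>\<^sup>+r. \<integral>\<^sup>+\<sigma>. ennreal (\<sigma> / (1 + r)\<^sup>2 * FPf a l b z (\<sigma> * r / (1 + r)) (\<sigma> / (1 + r))) \<partial>lborel \<partial>lborel)"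
  proof (rule cov)
    show "M2 (FPf a l b z)" unfolding M2_def FPf_def Wf_def borel_prod[symmetric] by measurable
    show "\<And>s t. 0 \<le> FPf a l b z s t" by (auto simp: FPf_def Wf_def indicator_def)
    show "\<And>s t. \<not> (0 < s \<and> 0 < t) \<Longrightarrow> FPf a l b z s t = 0" by (auto simp: FPf_def)
  qed
  also have "\<dots> = (\<integral>\<^sup>+r. \<integral>\<^sup>+\<sigma>. ennreal (Om a l b z \<sigma> r * Cf l r) \<partial>lborel \<partial>lborel)"
  proof (intro nn_integral_cong arg_cong[where f=ennreal])
    fix \<sigma> r :: real
    show "\<sigma> / (1 + r)\<^sup>2 * FPf a l b z (\<sigma> * r / (1 + r)) (\<sigma> / (1 + r)) = Om a l b z \<sigma> r * Cf l r"
    proof (cases "\<sigma> > 0 \<and> r > 0")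
      case True
      then have s: "\<sigma> > 0" and r: "r > 0" by auto
      have "\<sigma> / (1 + r)\<^sup>2 * FPf a l b z (\<sigma> * r / (1 + r)) (\<sigma> / (1 + r)) =
        exp (- z * \<sigma>) * (\<sigma> / (1 + r)\<^sup>2 * (Wf a b (\<sigma> * r / (1 + r)) * Wf a b (\<sigma> / (1 + r))) * (2 * \<sigma> powr (2 * l) * qf r powr l)) * Cf l r"
        unfolding FPf_def core_P[OF s r, of l] sum_st[OF r] using s r by simp
      also have "\<dots> = Om a l b z \<sigma> r * Cf l r"
        unfolding core_common[OF s r] Om_def Uf_def Vf_def using s r by simp
      finally show ?thesis .
    next
      case False
      then show ?thesis using not_both_pos[OF False] by (auto simp: FPf_def Om_def Uf_def Vf_def)
    qed
  qed
  finally show ?thesis .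
qed

lemma Q_Om:
  "(\<integral>\<^sup>+t. \<integral>\<^sup>+s. ennreal (FQf a l b z s t) \<partial>lborel \<partial>lborel) = (\<integral>\<^sup>+r. \<integral>\<^sup>+\<sigma>. ennreal (Om a l b z \<sigma> r) \<partial>lborel \<partial>lborel)"
proof -
  have "(\<integral>\<^sup>+t. \<integral>\<^sup>+s. ennreal (FQf a l b z s t) \<partial>lborel \<partial>lborel) =
    (\<integral>\<^sup>+r. \<integral>\<^sup>+\<sigma>. ennreal (\<sigma> / (1 + r)\<^sup>2 * FQf a l b z (\<sigma> * r / (1 + r)) (\<sigma> / (1 + r))) \<partial>lborel \<partial>lborel)"
  proof (rule cov)
    show "M2 (FQf a l b z)" unfolding M2_def FQf_def Wf_def borel_prod[symmetric] by measurable
    show "\<And>s t. 0 \<le> FQf a l b z s t" by (auto simp: FQf_def Wf_def indicator_def)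
    show "\<And>s t. \<not> (0 < s \<and> 0 < t) \<Longrightarrow> FQf a l b z s t = 0" by (auto simp: FQf_def)
  qed
  also have "\<dots> = (\<integral>\<^sup>+r. \<integral>\<^sup>+\<sigma>. ennreal (Om a l b z \<sigma> r) \<partial>lborel \<partial>lborel)"
  proof (intro nn_integral_cong arg_cong[where f=ennreal])
    fix \<sigma> r :: real
    show "\<sigma> / (1 + r)\<^sup>2 * FQf a l b z (\<sigma> * r / (1 + r)) (\<sigma> / (1 + r)) = Om a l b z \<sigma> r"
    proof (cases "\<sigma> > 0 \<and> r > 0")
      case True
      then have s: "\<sigma> > 0" and r: "r > 0" by auto
      have "\<sigma> / (1 + r)\<^sup>2 * FQf a l b z (\<sigma> * r / (1 + r)) (\<sigma> / (1 + r)) =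
        exp (- z * \<sigma>) * (\<sigma> / (1 + r)\<^sup>2 * (Wf a b (\<sigma> * r / (1 + r)) * Wf a b (\<sigma> / (1 + r))) * (2 * \<sigma> powr (2 * l) * qf r powr l))"
        unfolding FQf_def core_Q[OF s r, of l, symmetric] sum_st[OF r] using s r by (simp add: mult_ac)
      also have "\<dots> = Om a l b z \<sigma> r"
        unfolding core_common[OF s r] Om_def Uf_def Vf_def using s r by simp
      finally show ?thesis .
    next
      case False
      then show ?thesis using not_both_pos[OF False] by (auto simp: FQf_def Om_def Uf_def Vf_def)
    qed
  qed
  finally show ?thesis .
qed

lemma dummy_int:
  fixes f :: "real \<Rightarrow> real"
  assumes [measurable]: "f \<in> borel_measurable borel" and n: "\<And>x. f x \<ge> 0"
  shows "(\<integral>\<^sup>+r. \<integral>\<^sup>+s. ennreal (indicator {0<..<1::real} r * f s) \<partial>lborel \<partial>lborel) = (\<integral>\<^sup>+s. ennreal (f s) \<partial>lborel)"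
proof -
  have "(\<integral>\<^sup>+r. \<integral>\<^sup>+s. ennreal (indicator {0<..<1::real} r * f s) \<partial>lborel \<partial>lborel)
     = (\<integral>\<^sup>+r. indicator {0<..<1::real} r * (\<integral>\<^sup>+s. ennreal (f s) \<partial>lborel) \<partial>lborel)"
  proof (rule nn_integral_cong)
    fix r :: real
    show "(\<integral>\<^sup>+s. ennreal (indicator {0<..<1::real} r * f s) \<partial>lborel) = indicator {0<..<1::real} r * (\<integral>\<^sup>+s. ennreal (f s) \<partial>lborel)"
      using n by (subst nn_integral_cmult[symmetric]) (auto simp: ennreal_mult ennreal_indicator)
  qed
  also have "\<dots> = emeasure lborel {0<..<(1::real)} * (\<integral>\<^sup>+s. ennreal (f s) \<partial>lborel)"
    by (simp add: nn_integral_multc)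
  finally show ?thesis by simp
qed

lemma CS_Mint:
  fixes a l g z :: real
  assumes l: "l > 0" and z: "z \<ge> 0"
  assumes fin: "Mint (a + l) g z * Mint (a + l) g z \<noteq> \<infinity>"
  shows "Mint (a + l) g z * Mint (a + l) g z < Mint a g z * Mint (a + 2 * l) g z"
proof -
  define \<phi> where "\<phi> = (\<lambda>x::real. indicator {0<..} x * x powr (g - 1) * exp (- x) * (x + z) powr (- a))"
  define A where "A = (\<lambda>x::real. (x + z) powr (- l))"
  define D where "D = (\<lambda>r::real. indicator {0<..<1} r :: real)"
  have [measurable]: "\<phi> \<in> borel_measurable borel" "A \<in> borel_measurable borel" "D \<in> borel_measurable borel"
    unfolding \<phi>_def A_def D_def by measurable
  have pn: "\<phi> x \<ge> 0" "A x \<ge> 0" "D x \<ge> 0" for x by (auto simp: \<phi>_def A_def D_def)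
  have e1: "Mint (a + l) g z = (\<integral>\<^sup>+r. \<integral>\<^sup>+s. ennreal (D r * (\<phi> s * A s)) \<partial>lborel \<partial>lborel)"
    unfolding D_def
    by (subst dummy_int) (auto simp: pn Mint_def \<phi>_def A_def powr_add[symmetric] mult_ac intro!: nn_integral_cong)
  have e0: "Mint a g z = (\<integral>\<^sup>+r. \<integral>\<^sup>+s. ennreal (D r * \<phi> s) \<partial>lborel \<partial>lborel)"
    unfolding D_def
    by (subst dummy_int) (auto simp: pn Mint_def \<phi>_def intro!: nn_integral_cong)
  have e2: "Mint (a + 2 * l) g z = (\<integral>\<^sup>+r. \<integral>\<^sup>+s. ennreal (D r * (\<phi> s * A s ^ 2)) \<partial>lborel \<partial>lborel)"
  proof -
    have "(x + z) powr (- (a + 2 * l)) = (x + z) powr (- a) * ((x + z) powr (- l))\<^sup>2" for x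
      by (simp add: power2_eq_square powr_add[symmetric])
    then show ?thesis unfolding D_def
      by (subst dummy_int) (auto simp: pn Mint_def \<phi>_def A_def mult_ac intro!: nn_integral_cong)
  qed
  show ?thesis unfolding e0 e1 e2
  proof (rule sym4[where xa=1 and xb=2 and ya=0 and yb=1 and ua=3 and ub=4 and va=0 and vb=1])
    show "M2 (\<lambda>s r. D r * (\<phi> s * A s))"
      unfolding M2_def D_def \<phi>_def A_def borel_prod[symmetric] by measurable
    then show "M2 (\<lambda>s r. D r * (\<phi> s * A s))" .
    show "M2 (\<lambda>s r. D r * \<phi> s)"
      unfolding M2_def D_def \<phi>_def borel_prod[symmetric] by measurable
    show "M2 (\<lambda>s r. D r * (\<phi> s * A s ^ 2))"
      unfolding M2_def D_def \<phi>_def A_def borel_prod[symmetric] by measurable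
    show "\<And>s r. 0 \<le> D r * (\<phi> s * A s)" "\<And>s r. 0 \<le> D r * (\<phi> s * A s)" "\<And>s r. 0 \<le> D r * \<phi> s" "\<And>s r. 0 \<le> D r * (\<phi> s * A s ^ 2)"
      by (simp_all add: pn)
    show "(1::real) < 2" "(0::real) < 1" "(3::real) < 4" "(0::real) < 1" by simp_all
    show "(\<integral>\<^sup>+r. \<integral>\<^sup>+s. ennreal (D r * (\<phi> s * A s)) \<partial>lborel \<partial>lborel) * (\<integral>\<^sup>+r. \<integral>\<^sup>+s. ennreal (D r * (\<phi> s * A s)) \<partial>lborel \<partial>lborel) \<noteq> \<infinity>"
      using fin unfolding e1 .
    have id: "D r * \<phi> s * (D r' * (\<phi> s' * (A s')\<^sup>2)) + D r' * \<phi> s' * (D r * (\<phi> s * (A s)\<^sup>2)) +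
        D r' * \<phi> s * (D r * (\<phi> s' * (A s')\<^sup>2)) + D r * \<phi> s' * (D r' * (\<phi> s * (A s)\<^sup>2))
      - (D r * (\<phi> s * A s) * (D r' * (\<phi> s' * A s')) + D r' * (\<phi> s' * A s') * (D r * (\<phi> s * A s)) +
        D r' * (\<phi> s * A s) * (D r * (\<phi> s' * A s')) + D r * (\<phi> s' * A s') * (D r' * (\<phi> s * A s)))
      = 2 * (D r * D r' * \<phi> s * \<phi> s') * (A s - A s')\<^sup>2" for s r s' r'
      by (simp add: power2_eq_square algebra_simps)
    show "D r * (\<phi> s * A s) * (D r' * (\<phi> s' * A s')) + D r' * (\<phi> s' * A s') * (D r * (\<phi> s * A s)) +
        D r' * (\<phi> s * A s) * (D r * (\<phi> s' * A s')) + D r * (\<phi> s' * A s') * (D r' * (\<phi> s * A s))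
      \<le> D r * \<phi> s * (D r' * (\<phi> s' * (A s')\<^sup>2)) + D r' * \<phi> s' * (D r * (\<phi> s * (A s)\<^sup>2)) +
        D r' * \<phi> s * (D r * (\<phi> s' * (A s')\<^sup>2)) + D r * \<phi> s' * (D r' * (\<phi> s * (A s)\<^sup>2))" for s r s' r'
    proof -
      have "0 \<le> 2 * (D r * D r' * \<phi> s * \<phi> s') * (A s - A s')\<^sup>2" by (simp add: pn)
      then show ?thesis using id[of r s r' s'] by linarith
    qed
    show "D r * (\<phi> s * A s) * (D r' * (\<phi> s' * A s')) + D r' * (\<phi> s' * A s') * (D r * (\<phi> s * A s)) +
        D r' * (\<phi> s * A s) * (D r * (\<phi> s' * A s')) + D r * (\<phi> s' * A s') * (D r' * (\<phi> s * A s))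
      < D r * \<phi> s * (D r' * (\<phi> s' * (A s')\<^sup>2)) + D r' * \<phi> s' * (D r * (\<phi> s * (A s)\<^sup>2)) +
        D r' * \<phi> s * (D r * (\<phi> s' * (A s')\<^sup>2)) + D r * \<phi> s' * (D r' * (\<phi> s * (A s)\<^sup>2))"
      if "1 < s" "s < 2" "0 < r" "r < 1" "3 < s'" "s' < 4" "0 < r'" "r' < 1" for s r s' r'
    proof -
      have "D r = 1" "D r' = 1" using that by (auto simp: D_def)
      moreover have "\<phi> s > 0" "\<phi> s' > 0" using that z by (auto simp: \<phi>_def)
      moreover have "A s' < A s" unfolding A_def
        by (rule powr_less_mono2_neg) (use that z l in auto)
      ultimately have "0 < 2 * (D r * D r' * \<phi> s * \<phi> s') * (A s - A s')\<^sup>2" by simp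
      then show ?thesis using id[of r s r' s'] by linarith
    qed
  qed
qed

lemma Mint0:
  assumes "g - p > 0"
  shows "Mint p g 0 = ennreal (Gamma (g - p))"
proof -
  have "Mint p g 0 = (\<integral>\<^sup>+x. ennreal (indicator {0<..} x * x powr ((g - p) - 1) * exp (- (1 * x))) \<partial>lborel)"
    unfolding Mint_def
  proof (intro nn_integral_cong arg_cong[where f=ennreal])
    fix x :: real
    show "indicator {0<..} x * x powr (g - 1) * exp (- x) * (x + 0) powr (- p) =
      indicator {0<..} x * x powr (g - p - 1) * exp (- (1 * x))"
      by (cases "x > 0") (auto simp: powr_add[symmetric] algebra_simps)
  qed
  also have "\<dots> = ennreal (Gamma (g - p) * 1 powr (- (g - p)))"
    by (rule gamma_scaled) (use assms in auto)
  finally show ?thesis by simp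
qed

lemma Mint_le:
  assumes z: "z \<ge> 0" and p: "p > 0"
  shows "Mint p g z \<le> Mint p g 0"
  unfolding Mint_def
proof (intro nn_integral_mono ennreal_leI)
  fix x :: real
  show "indicator {0<..} x * x powr (g - 1) * exp (- x) * (x + z) powr (- p) \<le>
    indicator {0<..} x * x powr (g - 1) * exp (- x) * (x + 0) powr (- p)"
  proof (cases "x > 0")
    case True
    have "(x + z) powr (- p) \<le> x powr (- p)" by (rule powr_mono2') (use True z p in auto)
    then show ?thesis using True by (auto intro!: mult_left_mono)
  qed simp
qed

lemma Mint_pos:
  assumes z: "z \<ge> 0"
  shows "0 < Mint p g z"
  unfolding Mint_def
  by (rule pos1[where a=1 and b=2]) (use z in \<open>auto simp: indicator_def\<close>)

lemma Psi_eq: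
  "Psi p c' z = (1 / Gamma p) * enn2real (Nint p (c' - p - 1) z)"
proof -
  have "(LBINT t:{0<..}. exp (- z * t) * t powr (p - 1) * (1 + t) powr (c' - p - 1)) = enn2real (Nint p (c' - p - 1) z)"
    unfolding set_lebesgue_integral_def Nint_def
    by (subst integral_eq_nn_integral) (auto simp: indicator_def)
  then show ?thesis by (simp add: Psi_def)
qed

lemma enn_sym:
  fixes x y :: real
  assumes "0 \<le> x" "0 \<le> y"
  shows "ennreal x * ennreal y + ennreal y * ennreal x = ennreal (2 * (x * y))"
proof -
  have e: "ennreal x * ennreal y = ennreal (x * y)" by (rule ennreal_mult[symmetric]) (use assms in auto)
  have "ennreal x * ennreal y + ennreal y * ennreal x = ennreal (x * y) + ennreal (x * y)"
    by (simp only: e mult.commute[of "ennreal y"])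
  also have "\<dots> = ennreal (x * y + x * y)" by (rule ennreal_plus[symmetric]) (use assms in auto)
  also have "x * y + x * y = 2 * (x * y)" by simp
  finally show ?thesis .
qed

lemma ratio_less:
  fixes K1 K2 L1 L2 :: real
  assumes "0 < L1" "0 < L2" "K2 * L1 < K1 * L2"
  shows "K2 / L2 < K1 / L1"
  using assms by (simp add: field_simps)

theorem corollary10:
  fixes a l c :: real
  assumes "a > 0" and "l > 0" and "c < 1"
  defines "R \<equiv> (\<lambda>z. Psi a (c - 2*l) z * Psi (a + 2*l) c z / (Psi (a + l) (c - l) z)\<^sup>2)"
  shows "(\<forall>z1 z2. 0 < z1 \<longrightarrow> z1 < z2 \<longrightarrow> R z2 < R z1) \<and>
         (\<forall>z>0. 1 < R z \<and>
                R z < Gamma (1 - c) * Gamma (1 - c + 2*l) / (Gamma (1 - c + l))\<^sup>2)"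
proof -
  note a = assms(1) and l = assms(2) and c = assms(3)
  define g where "g = a + 2 * l + 1 - c"
  have g: "g > 0" using a l c by (simp add: g_def)
  have Gg: "Gamma g > 0" using g by (rule Gamma_real_pos)
  define P3 where "P3 = {a, a + l, a + 2 * l}"
  have pP: "p > 0" "g - p > 0" if "p \<in> P3" for p
    using that a l c by (auto simp: P3_def g_def)
  define m where "m = (\<lambda>p z. enn2real (Mint p g z))"
  have Mv: "Mint p g z = ennreal (m p z) \<and> 0 < m p z" if p: "p \<in> P3" and z: "z \<ge> 0" for p z
  proof -
    have "Mint p g z \<le> Mint p g 0" by (rule Mint_le[OF z pP(1)[OF p]])
    also have "\<dots> = ennreal (Gamma (g - p))" by (rule Mint0[OF pP(2)[OF p]])
    finally have fin: "Mint p g z < \<infinity>" using le_less_trans by fastforce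
    have pos: "0 < Mint p g z" by (rule Mint_pos[OF z])
    show ?thesis using fin pos unfolding m_def
      by (auto simp: enn2real_positive_iff ennreal_enn2real less_top[symmetric])
  qed
  have Nv: "Nint p (- g) z = ennreal (Gamma p / Gamma g * m p z)" if p: "p \<in> P3" and z: "z \<ge> 0" for p z
  proof -
    have Gp: "Gamma p > 0" using pP(1)[OF p] by (rule Gamma_real_pos)
    have mp: "m p z > 0" using Mv[OF p z] by simp
    have e: "ennreal (Gamma g) * Nint p (- g) z = ennreal (Gamma p * m p z)"
      using xrep[OF pP(1)[OF p] g z] Mv[OF p z] Gp mp by (simp add: ennreal_mult)
    have "Nint p (- g) z = ennreal (1 / Gamma g) * (ennreal (Gamma g) * Nint p (- g) z)"
      using Gg by (simp add: ennreal_mult[symmetric] mult.assoc[symmetric])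
    also have "\<dots> = ennreal (Gamma p / Gamma g * m p z)"
      unfolding e using Gg Gp mp by (simp add: ennreal_mult[symmetric])
    finally show ?thesis .
  qed
  have Psiv: "Psi p c' z = m p z / Gamma g" if p: "p \<in> P3" and z: "z \<ge> 0" and cp: "c' - p - 1 = - g" for p c' z
  proof -
    have Gp: "Gamma p > 0" using pP(1)[OF p] by (rule Gamma_real_pos)
    have mp: "m p z > 0" using Mv[OF p z] by simp
    show ?thesis unfolding Psi_eq cp Nv[OF p z] using Gp Gg mp by simp
  qed
  have inP: "a \<in> P3" "a + l \<in> P3" "a + 2 * l \<in> P3" by (auto simp: P3_def)
  define K where "K = (\<lambda>z. m a z * m (a + 2 * l) z)"
  define L where "L = (\<lambda>z. (m (a + l) z)\<^sup>2)"
  have Kp: "K z > 0" and Lp: "L z > 0" if "z \<ge> 0" for z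
    using Mv[OF inP(1) that] Mv[OF inP(2) that] Mv[OF inP(3) that] by (auto simp: K_def L_def)
  have Rv: "R z = K z / L z" if z: "z \<ge> 0" for z
  proof -
    have p1: "Psi a (c - 2 * l) z = m a z / Gamma g" by (rule Psiv[OF inP(1) z]) (simp add: g_def)
    have p2: "Psi (a + 2 * l) c z = m (a + 2 * l) z / Gamma g" by (rule Psiv[OF inP(3) z]) (simp add: g_def)
    have p3: "Psi (a + l) (c - l) z = m (a + l) z / Gamma g" by (rule Psiv[OF inP(2) z]) (simp add: g_def)
    have e: "R z = (m a z / Gamma g) * (m (a + 2 * l) z / Gamma g) / (m (a + l) z / Gamma g)\<^sup>2"
      unfolding R_def by (simp only: p1 p2 p3)
    have "m (a + l) z > 0" using Mv[OF inP(2) z] by simp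
    then show ?thesis using Gg unfolding e K_def L_def by (simp add: power2_eq_square field_simps)
  qed
  have mono: "K z2 * L z1 < K z1 * L z2" if z1: "0 \<le> z1" and z12: "z1 < z2" for z1 z2
  proof -
    have z2: "0 \<le> z2" using z1 z12 by simp
    define na where "na = (\<lambda>z. Gamma a / Gamma g * m a z)"
    define n1 where "n1 = (\<lambda>z. Gamma (a + l) / Gamma g * m (a + l) z)"
    define n2 where "n2 = (\<lambda>z. Gamma (a + 2 * l) / Gamma g * m (a + 2 * l) z)"
    have nn: "na z \<ge> 0" "n1 z \<ge> 0" "n2 z \<ge> 0" if "z \<ge> 0" for z
      using Mv[OF inP(1) that] Mv[OF inP(2) that] Mv[OF inP(3) that] Gg
        Gamma_real_pos[OF pP(1)[OF inP(1)]] Gamma_real_pos[OF pP(1)[OF inP(2)]] Gamma_real_pos[OF pP(1)[OF inP(3)]]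
      by (auto simp: na_def n1_def n2_def)
    have Pv: "(\<integral>\<^sup>+r. \<integral>\<^sup>+\<sigma>. ennreal (Om a l (- g) z \<sigma> r * Cf l r) \<partial>lborel \<partial>lborel) = ennreal (2 * (na z * n2 z))"
      if z: "z \<ge> 0" for z
    proof -
      have "(\<integral>\<^sup>+r. \<integral>\<^sup>+\<sigma>. ennreal (Om a l (- g) z \<sigma> r * Cf l r) \<partial>lborel \<partial>lborel) =
        Nint a (- g) z * Nint (a + 2 * l) (- g) z + Nint (a + 2 * l) (- g) z * Nint a (- g) z"
        unfolding P_Om[symmetric] P_N ..
      also have "\<dots> = ennreal (2 * (na z * n2 z))"
        unfolding Nv[OF inP(1) z] Nv[OF inP(3) z] using enn_sym[OF nn(1)[OF z] nn(3)[OF z]] by (simp add: na_def n2_def)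
      finally show ?thesis .
    qed
    have Qv: "(\<integral>\<^sup>+r. \<integral>\<^sup>+\<sigma>. ennreal (Om a l (- g) z \<sigma> r) \<partial>lborel \<partial>lborel) = ennreal (2 * (n1 z * n1 z))"
      if z: "z \<ge> 0" for z
    proof -
      have "(\<integral>\<^sup>+r. \<integral>\<^sup>+\<sigma>. ennreal (Om a l (- g) z \<sigma> r) \<partial>lborel \<partial>lborel) =
        Nint (a + l) (- g) z * Nint (a + l) (- g) z + Nint (a + l) (- g) z * Nint (a + l) (- g) z"
        unfolding Q_Om[symmetric] Q_N ..
      also have "\<dots> = ennreal (2 * (n1 z * n1 z))"
        unfolding Nv[OF inP(2) z] using enn_sym[OF nn(2)[OF z] nn(2)[OF z]] by (simp add: n1_def)
      finally show ?thesis .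
    qed
    have fin: "ennreal (2 * (na z2 * n2 z2)) * ennreal (2 * (n1 z1 * n1 z1)) \<noteq> \<infinity>"
      using nn[OF z1] nn[OF z2] by (simp add: ennreal_mult[symmetric])
    have "ennreal (2 * (na z2 * n2 z2)) * ennreal (2 * (n1 z1 * n1 z1)) < ennreal (2 * (na z1 * n2 z1)) * ennreal (2 * (n1 z2 * n1 z2))"
      using mono_core[of z1 z2 "- g" l a] z12 g l fin unfolding Pv[OF z1] Pv[OF z2] Qv[OF z1] Qv[OF z2]
      by simp
    then have ineq: "2 * (na z2 * n2 z2) * (2 * (n1 z1 * n1 z1)) < 2 * (na z1 * n2 z1) * (2 * (n1 z2 * n1 z2))"
      using nn[OF z1] nn[OF z2] by (simp add: ennreal_mult[symmetric] ennreal_less_iff)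
    define C where "C = 4 * (Gamma a / Gamma g) * (Gamma (a + 2 * l) / Gamma g) * (Gamma (a + l) / Gamma g)\<^sup>2"
    have eq: "2 * (na z * n2 z) * (2 * (n1 z' * n1 z')) = C * (K z * L z')" for z z'
      unfolding na_def n1_def n2_def K_def L_def C_def by (simp add: power2_eq_square)
    have Cp: "0 < C"
      using Gg Gamma_real_pos[OF pP(1)[OF inP(1)]] Gamma_real_pos[OF pP(1)[OF inP(2)]] Gamma_real_pos[OF pP(1)[OF inP(3)]]
      unfolding C_def by simp
    have "C * (K z2 * L z1) < C * (K z1 * L z2)" using ineq unfolding eq .
    then show ?thesis using Cp by simp
  qed
  have cs: "L z < K z" if z: "z \<ge> 0" for z
  proof -
    have "Mint (a + l) g z * Mint (a + l) g z < Mint a g z * Mint (a + 2 * l) g z"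
      by (rule CS_Mint[OF l z]) (use Mv[OF inP(2) z] in \<open>simp add: ennreal_mult[symmetric]\<close>)
    then have "ennreal (m (a + l) z * m (a + l) z) < ennreal (m a z * m (a + 2 * l) z)"
      using Mv[OF inP(1) z] Mv[OF inP(2) z] Mv[OF inP(3) z] by (simp add: ennreal_mult[symmetric])
    then show ?thesis using Mv[OF inP(2) z]
      by (simp add: ennreal_less_iff K_def L_def power2_eq_square)
  qed
  have m0: "m p 0 = Gamma (g - p)" if p: "p \<in> P3" for p
    unfolding m_def Mint0[OF pP(2)[OF p]] using Gamma_real_pos[OF pP(2)[OF p]] by simp
  have R0: "K 0 / L 0 = Gamma (1 - c) * Gamma (1 - c + 2*l) / (Gamma (1 - c + l))\<^sup>2"
  proof -
    have e1: "g - a = 1 - c + 2 * l" and e2: "g - (a + 2 * l) = 1 - c" and e3: "g - (a + l) = 1 - c + l" by (simp_all add: g_def)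
    show ?thesis unfolding K_def L_def m0[OF inP(1)] m0[OF inP(2)] m0[OF inP(3)] e1 e2 e3 by (simp add: mult.commute)
  qed
  show ?thesis
  proof (intro conjI allI impI)
    fix z1 z2 :: real assume h: "0 < z1" "z1 < z2"
    have "R z2 = K z2 / L z2" "R z1 = K z1 / L z1" using h by (intro Rv; simp)+
    moreover have "K z2 / L z2 < K z1 / L z1"
      using h by (intro ratio_less Lp mono) auto
    ultimately show "R z2 < R z1" by simp
  next
    fix z :: real assume h: "0 < z"
    have r: "R z = K z / L z" using h by (intro Rv) simp
    show "1 < R z" unfolding r using h cs[of z] Lp[of z] by simp
    have "K z / L z < K 0 / L 0"
      using h by (intro ratio_less Lp mono) auto
    then show "R z < Gamma (1 - c) * Gamma (1 - c + 2*l) / (Gamma (1 - c + l))\<^sup>2"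
      unfolding r R0 .
  qed
qed

end
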